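(* Let $X$ be a set and $\{d_r\colon X\times X\to\mathbb{R}_{\ge0}\cup\{\infty\}\}_{r>0}$ a family satisfying the weaker $\{d_r\}$-axioms (see context). Then the $D$-topology of the diffeology on $X$ induced by $\{d_r\}_{r>0}$ is finer than the topology on $X$ induced by $\{d_r\}_{r>0}$, namely the topology in which $W\subset X$ is open iff for every $x\in W$ there are $r,\varepsilon>0$ with $\{y\in X\mid d_r(x,y)<\varepsilon\}\subset W$.
   Context: The weaker $\{d_r\}$-axioms, required for all $x,y,z\in X$: (Self-distance) $d_r(x,x)=0$ for all $r>0$. (Upper semi-continuity) if $r_1\le r_2$ then $d_{r_1}(x,y)\le d_{r_2}(x,y)$; and if $d_r(x,y)<\varepsilon$ there is $\delta>0$ with $d_{r+\delta}(x,y)<\varepsilon$. (Weaker triangle inequality) for $r_1,r_2,r_3>0$, if $d_{r_1+r_2+r_3}(x,y)<r_3$ and $d_{r_1+r_2+r_3}(y,z)<r_2$, then $d_{r_1}(x,z)\le d_{r_1+r_2+r_3}(x,y)+d_{r_1+r_2+r_3}(y,z)$. The diffeology induced by $\{d_r\}$ consists of the maps $p\colon U_p\to X$ ($U_p$ open in some $\mathbb{R}^n$) such that for each $t_0\in U_p$ there is $\delta>0$ with (1) $t\mapsto d_r(p(t_0),p(t))$ real-valued and continuous on the open ball $B_\delta(t_0)$ for every $r>0$, and (2) for each $t_1\in B_\delta(t_0)\setminus p^{-1}(p(t_0))$ and each $r>0$, $t\mapsto d_r(p(t_1),p(t))$ is smooth at $t_0$ (this set is a diffeology). The $D$-topology of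 a diffeology is the largest topology on $X$ for which all plots are continuous, i.e. $W\subset X$ is $D$-open iff $p^{-1}(W)$ is open for every plot $p$. *)

theory Defs
  imports "HOL-Analysis.Analysis" "HOL-Library.Extended_Nonnegative_Real"
begin

primrec Ck_on :: "nat \<Rightarrow> 'n::euclidean_space set \<Rightarrow> ('n \<Rightarrow> real) \<Rightarrow> bool" where
  "Ck_on 0 V f = continuous_on V f"
| "Ck_on (Suc k) V f =
     ((\<forall>t\<in>V. f differentiable (at t)) \<and>
      (\<forall>i\<in>Basis. Ck_on k V (\<lambda>t. frechet_derivative f (at t) i)))"

definition smooth_at_pt :: "('n::euclidean_space \<Rightarrow> ennreal) \<Rightarrow> 'n \<Rightarrow> bool" where
  "smooth_at_pt f t0 \<longleftrightarrow>
     (\<exists>V. open V \<and> t0 \<in> V \<and> (\<forall>t\<in>V. f t \<noteq> \<infinity>) \<and>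
          (\<forall>k. Ck_on k V (\<lambda>t. enn2real (f t))))"

text \<open>The weaker {d_r}-axioms; d r x y is d_r(x,y), only r > 0 is relevant.\<close>
definition weaker_dr_axioms :: "(real \<Rightarrow> 'a \<Rightarrow> 'a \<Rightarrow> ennreal) \<Rightarrow> bool" where
  "weaker_dr_axioms d \<longleftrightarrow>
     (\<forall>x r. r > 0 \<longrightarrow> d r x x = 0) \<and>
     (\<forall>x y r1 r2. 0 < r1 \<longrightarrow> r1 \<le> r2 \<longrightarrow> d r1 x y \<le> d r2 x y) \<and>
     (\<forall>x y r (\<epsilon>::real). r > 0 \<longrightarrow> d r x y < ennreal \<epsilon> \<longrightarrow>
         (\<exists>\<delta>>0. d (r + \<delta>) x y < ennreal \<epsilon>)) \<and>
     (\<forall>x y z r1 r2 r3. r1 > 0 \<longrightarrow> r2 > 0 \<longrightarrow> r3 > 0 \<longrightarrow>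
         d (r1 + r2 + r3) x y < ennreal r3 \<longrightarrow> d (r1 + r2 + r3) y z < ennreal r2 \<longrightarrow>
         d r1 x z \<le> d (r1 + r2 + r3) x y + d (r1 + r2 + r3) y z)"

definition dr_plot :: "(real \<Rightarrow> 'a \<Rightarrow> 'a \<Rightarrow> ennreal) \<Rightarrow> (real^'n) set \<Rightarrow> (real^'n \<Rightarrow> 'a) \<Rightarrow> bool" where
  "dr_plot d U p \<longleftrightarrow> open U \<and>
     (\<forall>t0\<in>U. \<exists>\<delta>>0. ball t0 \<delta> \<subseteq> U \<and>
        (\<forall>r>0. (\<forall>t\<in>ball t0 \<delta>. d r (p t0) (p t) \<noteq> \<infinity>) \<and>
               continuous_on (ball t0 \<delta>) (\<lambda>t. enn2real (d r (p t0) (p t)))) \<and>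
        (\<forall>t1\<in>ball t0 \<delta>. p t1 \<noteq> p t0 \<longrightarrow>
           (\<forall>r>0. smooth_at_pt (\<lambda>t. d r (p t1) (p t)) t0)))"

definition dr_open :: "(real \<Rightarrow> 'a \<Rightarrow> 'a \<Rightarrow> ennreal) \<Rightarrow> 'a set \<Rightarrow> bool" where
  "dr_open d W \<longleftrightarrow> (\<forall>x\<in>W. \<exists>r>0. \<exists>\<epsilon>>0. {y. d r x y < ennreal \<epsilon>} \<subseteq> W)"

end

theory Submission
  imports Defs
begin

theorem propositionA2:
  fixes d :: "real \<Rightarrow> 'a \<Rightarrow> 'a \<Rightarrow> ennreal"
    and W :: "'a set"
  assumes "weaker_dr_axioms d"
    and "dr_open d W"
  shows "\<forall>(U :: (real^'n) set) p. dr_plot d U p \<longrightarrow> open {t\<in>U. p t \<in> W}"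
proof (intro allI impI)
  fix U :: "(real^'n) set" and p
  assume pl: "dr_plot d U p"
  have self: "\<And>x r. r > 0 \<Longrightarrow> d r x x = 0" using assms(1) unfolding weaker_dr_axioms_def by blast
  show "open {t\<in>U. p t \<in> W}"
  proof (rule openI)
    fix t0 assume t0: "t0 \<in> {t\<in>U. p t \<in> W}"
    then obtain r e where r: "r > 0" "e > 0" and sub: "{y. d r (p t0) y < ennreal e} \<subseteq> W"
      using assms(2) unfolding dr_open_def by blast
    from t0 pl obtain \<delta> where dl: "\<delta> > 0" "ball t0 \<delta> \<subseteq> U"
      and fin: "\<forall>t\<in>ball t0 \<delta>. d r (p t0) (p t) \<noteq> \<infinity>"
      and cont: "continuous_on (ball t0 \<delta>) (\<lambda>t. enn2real (d r (p t0) (p t)))"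
      unfolding dr_plot_def using r(1) by blast
    let ?f = "\<lambda>t. enn2real (d r (p t0) (p t))"
    have "isCont ?f t0" using cont dl(1)
      by (simp add: continuous_on_eq_continuous_at)
    moreover have "?f t0 = 0" using self[OF r(1)] by simp
    ultimately obtain s where s: "s > 0" "\<forall>y. dist y t0 < s \<longrightarrow> dist (?f y) 0 < e"
      using r(2) unfolding continuous_at_eps_delta by metis
    show "\<exists>e'>0. ball t0 e' \<subseteq> {t\<in>U. p t \<in> W}"
    proof (intro exI conjI)
      show "min s \<delta> > 0" using s dl by simp
      show "ball t0 (min s \<delta>) \<subseteq> {t\<in>U. p t \<in> W}"
      proof
        fix t assume tb: "t \<in> ball t0 (min s \<delta>)"
        then have tU: "t \<in> ball t0 \<delta>" by simp
        have "dist t t0 < s" using tb by (simp add: dist_commute)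
        then have lt: "?f t < e" using s by (simp add: dist_real_def)
        have "d r (p t0) (p t) \<noteq> \<infinity>" using fin tU by blast
        then have "d r (p t0) (p t) = ennreal (?f t)" by (simp add: ennreal_enn2real_if)
        also have "\<dots> < ennreal e" using lt r(2) by (simp add: ennreal_lessI)
        finally have "p t \<in> W" using sub by blast
        then show "t \<in> {t\<in>U. p t \<in> W}" using tU dl(2) by blast
      qed
    qed
  qed
qed

end
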